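(* For each integer $n > 0$, the space $\operatorname{span}\{f_1 f_2 \cdots f_n : f_i \in C_c(G_1) \text{ for all } i\}$ (convolution products) is dense in $C_c(G_n)$ (in the inductive limit / uniform sense given by Stone–Weierstrass, in particular in the $C^*_r(G)$-norm), and $C_c(G_n)^* = C_c(G_{-n})$.
   Context: Throughout, $G$ is a second-countable locally compact Hausdorff étale groupoid and $c : G \to \mathbb{Z}$ is a continuous cocycle which is unperforated: whenever $c(\gamma)=n>0$ there exist composable $\gamma_1,\dots,\gamma_n$ with $c(\gamma_i)=1$ and $\gamma=\gamma_1\cdots\gamma_n$. For $n \in \mathbb{Z}$, $G_n := c^{-1}(n)$ (a clopen subset of $G$), and $C_c(G_n)$ denotes compactly supported continuous functions on $G$ supported in $G_n$. The involution is $f^*(\gamma)=\overline{f(\gamma^{-1})}$. *)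

theory Defs
  imports "HOL-Analysis.Analysis"
begin

text \<open>An etale groupoid whose underlying set is the whole type 'g. Composable pairs are
  (g,h) with s g = r h; the product is m g h; the inverse is iv.\<close>

definition etale_groupoid ::
  "('g::{t2_space,second_countable_topology} \<Rightarrow> 'g) \<Rightarrow> ('g \<Rightarrow> 'g) \<Rightarrow> ('g \<Rightarrow> 'g \<Rightarrow> 'g) \<Rightarrow> ('g \<Rightarrow> 'g) \<Rightarrow> bool"
  where "etale_groupoid r s m iv \<longleftrightarrow>
    \<comment> \<open>algebraic groupoid axioms\<close>
    (\<forall>g. r (r g) = r g \<and> s (r g) = r g \<and> r (s g) = s g \<and> s (s g) = s g) \<and>
    (\<forall>g h. s g = r h \<longrightarrow> r (m g h) = r g \<and> s (m g h) = s h) \<and>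
    (\<forall>g h k. s g = r h \<longrightarrow> s h = r k \<longrightarrow> m (m g h) k = m g (m h k)) \<and>
    (\<forall>g. m (r g) g = g \<and> m g (s g) = g) \<and>
    (\<forall>g. s (iv g) = r g \<and> r (iv g) = s g \<and> m g (iv g) = r g \<and> m (iv g) g = s g) \<and>
    \<comment> \<open>topological axioms\<close>
    locally_compact_space (euclidean :: 'g topology) \<and>
    continuous_on {(g, h). s g = r h} (\<lambda>(g, h). m g h) \<and>
    continuous_on UNIV iv \<and>
    continuous_on UNIV r \<and> continuous_on UNIV s \<and>
    \<comment> \<open>etale: the range map is a local homeomorphism\<close>
    (\<forall>g. \<exists>U r'. open U \<and> g \<in> U \<and> open (r ` U) \<and> homeomorphism U (r ` U) r r')"

definition cocycle :: "('g \<Rightarrow> 'g) \<Rightarrow> ('g \<Rightarrow> 'g) \<Rightarrow> ('g \<Rightarrow> 'g \<Rightarrow> 'g) \<Rightarrow> ('g::topological_space \<Rightarrow> int) \<Rightarrow> bool"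
  where "cocycle r s m c \<longleftrightarrow> continuous_on UNIV c \<and>
     (\<forall>g h. s g = r h \<longrightarrow> c (m g h) = c g + c h)"

text \<open>Unperforated: every \<gamma> with c \<gamma> = n > 0 is a product \<gamma>1 \<cdots> \<gamma>n of composable
  elements of degree 1. Products are formed from the left; by associativity any bracketing agrees.\<close>
fun list_prod :: "('g \<Rightarrow> 'g \<Rightarrow> 'g) \<Rightarrow> 'g \<Rightarrow> 'g list \<Rightarrow> 'g" where
  "list_prod m a [] = a"
| "list_prod m a (b # bs) = list_prod m (m a b) bs"

fun composable_list :: "('g \<Rightarrow> 'g) \<Rightarrow> ('g \<Rightarrow> 'g) \<Rightarrow> 'g list \<Rightarrow> bool" where
  "composable_list r s [] = True"
| "composable_list r s [a] = True"
| "composable_list r s (a # b # bs) = (s a = r b \<and> composable_list r s (b # bs))"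

definition unperforated :: "('g \<Rightarrow> 'g) \<Rightarrow> ('g \<Rightarrow> 'g) \<Rightarrow> ('g \<Rightarrow> 'g \<Rightarrow> 'g) \<Rightarrow> ('g \<Rightarrow> int) \<Rightarrow> bool"
  where "unperforated r s m c \<longleftrightarrow>
    (\<forall>\<gamma> n. c \<gamma> = int n \<and> n > 0 \<longrightarrow>
       (\<exists>gs. length gs = n \<and> composable_list r s gs \<and> (\<forall>x\<in>set gs. c x = 1) \<and>
             \<gamma> = list_prod m (hd gs) (tl gs)))"

definition Cc_deg :: "('g::topological_space \<Rightarrow> int) \<Rightarrow> int \<Rightarrow> ('g \<Rightarrow> complex) set"
  where "Cc_deg c n = {f. continuous_on UNIV f \<and> compact (closure {x. f x \<noteq> 0}) \<and>
                          closure {x. f x \<noteq> 0} \<subseteq> c -` {n}}"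

definition conv :: "('g \<Rightarrow> 'g) \<Rightarrow> ('g \<Rightarrow> 'g \<Rightarrow> 'g) \<Rightarrow> ('g \<Rightarrow> 'g)
    \<Rightarrow> ('g \<Rightarrow> complex) \<Rightarrow> ('g \<Rightarrow> complex) \<Rightarrow> 'g \<Rightarrow> complex"
  where "conv r m iv f g \<gamma> = (\<Sum>\<alpha>\<in>{\<alpha>. r \<alpha> = r \<gamma> \<and> f \<alpha> \<noteq> 0}. f \<alpha> * g (m (iv \<alpha>) \<gamma>))"

fun conv_list :: "('g \<Rightarrow> 'g) \<Rightarrow> ('g \<Rightarrow> 'g \<Rightarrow> 'g) \<Rightarrow> ('g \<Rightarrow> 'g)
    \<Rightarrow> ('g \<Rightarrow> complex) list \<Rightarrow> 'g \<Rightarrow> complex" where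
  "conv_list r m iv [] = (\<lambda>_. 0)"
| "conv_list r m iv [f] = f"
| "conv_list r m iv (f # g # fs) = conv r m iv f (conv_list r m iv (g # fs))"

definition involution :: "('g \<Rightarrow> 'g) \<Rightarrow> ('g \<Rightarrow> complex) \<Rightarrow> 'g \<Rightarrow> complex"
  where "involution iv f \<gamma> = cnj (f (iv \<gamma>))"

definition prod_span :: "('g::topological_space \<Rightarrow> 'g) \<Rightarrow> ('g \<Rightarrow> 'g \<Rightarrow> 'g) \<Rightarrow> ('g \<Rightarrow> 'g)
    \<Rightarrow> ('g \<Rightarrow> int) \<Rightarrow> nat \<Rightarrow> ('g \<Rightarrow> complex) set"
  where "prod_span r m iv c n =
    {(\<lambda>\<gamma>. \<Sum>i<k. a i * conv_list r m iv (F i) \<gamma>) | (k::nat) (a::nat \<Rightarrow> complex) F.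
        \<forall>i<k. length (F i) = n \<and> (\<forall>f\<in>set (F i). f \<in> Cc_deg c 1)}"

text \<open>Density in the inductive limit topology: f is a uniform limit of elements
  all supported in one fixed compact set.\<close>
definition inductive_limit_dense :: "('g::topological_space \<Rightarrow> complex) set \<Rightarrow> ('g \<Rightarrow> complex) set \<Rightarrow> bool"
  where "inductive_limit_dense S T \<longleftrightarrow>
    (\<forall>f\<in>T. \<exists>K. compact K \<and>
       (\<forall>\<epsilon>>0. \<exists>g\<in>S. closure {x. g x \<noteq> 0} \<subseteq> K \<and> (\<forall>x. norm (f x - g x) < \<epsilon>)))"

end

theory Submission
  imports Defs
begin

locale egpd =
  fixes r s iv :: "'g::{t2_space,second_countable_topology} \<Rightarrow> 'g"
    and m :: "'g \<Rightarrow> 'g \<Rightarrow> 'g"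
    and c :: "'g \<Rightarrow> int"
  assumes eg: "etale_groupoid r s m iv"
    and cc: "cocycle r s m c"
begin

lemma rr[simp]: "r (r g) = r g" and sr[simp]: "s (r g) = r g" and rs[simp]: "r (s g) = s g"
  and ss[simp]: "s (s g) = s g"
  using eg unfolding etale_groupoid_def by auto

lemma rm[simp]: "s g = r h \<Longrightarrow> r (m g h) = r g" and sm[simp]: "s g = r h \<Longrightarrow> s (m g h) = s h"
  using eg unfolding etale_groupoid_def by auto

lemma assoc: "s g = r h \<Longrightarrow> s h = r k \<Longrightarrow> m (m g h) k = m g (m h k)"
  using eg unfolding etale_groupoid_def by auto

lemma unitl[simp]: "m (r g) g = g" and unitr[simp]: "m g (s g) = g"
  using eg unfolding etale_groupoid_def by auto

lemma siv[simp]: "s (iv g) = r g" and riv[simp]: "r (iv g) = s g"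
  and miv[simp]: "m g (iv g) = r g" and ivm[simp]: "m (iv g) g = s g"
  using eg unfolding etale_groupoid_def by auto

lemma iviv[simp]: "iv (iv g) = g"
proof -
  have "iv (iv g) = m (iv (iv g)) (s (iv (iv g)))" by (rule unitr[symmetric])
  also have "\<dots> = m (iv (iv g)) (m (iv g) g)" by (simp only: siv riv ivm)
  also have "\<dots> = m (m (iv (iv g)) (iv g)) g" by (rule assoc[symmetric]) simp_all
  also have "\<dots> = g" by (simp only: ivm siv unitl)
  finally show ?thesis .
qed

lemma lcs: "locally_compact_space (euclidean :: 'g topology)"
  and cont_m: "continuous_on {(g, h). s g = r h} (\<lambda>(g, h). m g h)"
  and cont_iv: "continuous_on UNIV iv" and cont_r: "continuous_on UNIV r"
  and cont_s: "continuous_on UNIV s"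
  and etale: "\<And>g. \<exists>U r'. open U \<and> g \<in> U \<and> open (r ` U) \<and> homeomorphism U (r ` U) r r'"
  using eg unfolding etale_groupoid_def by auto

lemma cont_c: "continuous_on UNIV c" and cmul: "s g = r h \<Longrightarrow> c (m g h) = c g + c h"
  using cc unfolding cocycle_def by auto

lemma c_r[simp]: "c (r g) = 0"
proof -
  have "c (m (r g) (r g)) = c (r g) + c (r g)" by (rule cmul) simp
  moreover have "m (r g) (r g) = r g" using unitl[of "r g"] by simp
  ultimately show ?thesis by simp
qed

lemma c_iv[simp]: "c (iv g) = - c g"
proof -
  have "c (m g (iv g)) = c g + c (iv g)" by (rule cmul) simp
  then show ?thesis by simp
qed

lemma open_c: "open (c -` {k})"
proof -
  have "open ({k}::int set)" by (simp add: open_discrete) 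
  then show ?thesis using cont_c by (simp add: continuous_on_open_vimage)
qed

end


lemma hausdorff_eu: "Hausdorff_space (euclidean :: 'a::t2_space topology)"
  unfolding Hausdorff_space_def
  by (metis disjnt_def open_openin separation_t2)

lemma lindelof_eu: "Lindelof_space (euclidean :: 'a::second_countable_topology topology)"
  unfolding Lindelof_space_def
proof clarify
  fix \<U> :: "'a set set"
  assume "\<forall>U\<in>\<U>. openin euclidean U" "\<Union>\<U> = topspace euclidean"
  then obtain \<F> where "\<F> \<subseteq> \<U>" "countable \<F>" "\<Union>\<F> = \<Union>\<U>"
    using Lindelof[of \<U>] by (metis open_openin)
  then show "\<exists>\<V>. countable \<V> \<and> \<V> \<subseteq> \<U> \<and> \<Union> \<V> = topspace euclidean"
    using \<open>\<Union>\<U> = topspace euclidean\<close> by auto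
qed

context egpd begin

lemma normal_eu: "normal_space (euclidean :: 'g topology)"
  using regular_Lindelof_imp_normal_space[OF locally_compact_Hausdorff_imp_regular_space[OF lcs hausdorff_eu] lindelof_eu] .

lemma shrink:
  fixes C :: "'g set"
  assumes "compact C" "open Op" "C \<subseteq> Op"
  obtains V where "open V" "C \<subseteq> V" "compact (closure V)" "closure V \<subseteq> Op"
proof -
  have "\<exists>U L. openin euclidean U \<and> compactin euclidean L \<and> closedin euclidean L \<and> C \<subseteq> U \<and> U \<subseteq> L"
    using iffD1[OF locally_compact_space_compact_closed_compact[OF disjI1[OF hausdorff_eu]] lcs] assms(1)
    by simp
  then obtain U L where UL: "open U" "compact L" "closed L" "C \<subseteq> U" "U \<subseteq> L"
    by (auto simp: closed_closedin[symmetric])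
  have "closed C" using assms(1) by (simp add: compact_imp_closed)
  then obtain V1 where V1: "open V1" "C \<subseteq> V1" "closure V1 \<subseteq> Op"
    using normal_eu assms unfolding normal_space_alt
    by (metis closed_closedin euclidean_closure_of open_openin)
  show ?thesis
  proof
    show "open (V1 \<inter> U)" using V1 UL by auto
    show "C \<subseteq> V1 \<inter> U" using V1 UL by auto
    have "closure (V1 \<inter> U) \<subseteq> L" using UL by (meson closure_minimal inf_le2 order_trans)
    then show "compact (closure (V1 \<inter> U))" using UL
      by (metis closed_closure compact_Int_closed inf.absorb_iff2)
    show "closure (V1 \<inter> U) \<subseteq> Op" using V1 by (meson closure_mono inf_le1 order_trans)
  qed
qed

lemma bump:
  fixes C :: "'g set"
  assumes "compact C" "open Op" "C \<subseteq> Op"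
  obtains \<phi> :: "'g \<Rightarrow> real" where "continuous_on UNIV \<phi>" "\<And>x. 0 \<le> \<phi> x \<and> \<phi> x \<le> 1"
    "\<And>x. x \<in> C \<Longrightarrow> \<phi> x = 1" "compact (closure {x. \<phi> x \<noteq> 0})" "closure {x. \<phi> x \<noteq> 0} \<subseteq> Op"
proof -
  obtain V where V: "open V" "C \<subseteq> V" "compact (closure V)" "closure V \<subseteq> Op"
    using shrink assms by blast
  have "closedin euclidean (- V)" "closedin euclidean C"
    using V(1) assms(1) by (auto simp: compact_imp_closed closed_closedin[symmetric])
  moreover have "disjnt (- V) C" using V by (auto simp: disjnt_def)
  ultimately obtain f where f: "continuous_map euclidean (top_of_set {0..1::real}) f"
    "f ` (- V) \<subseteq> {0}" "f ` C \<subseteq> {1}"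
    using Urysohn_lemma[OF normal_eu, of "- V" C 0 1] by auto
  have sub: "{x. f x \<noteq> 0} \<subseteq> V" using f(2) by auto
  show ?thesis
  proof
    show "continuous_on UNIV f" using f(1)
      by (simp add: continuous_map_in_subtopology)
    show "0 \<le> f x \<and> f x \<le> 1" for x using f(1)
      by (auto simp: continuous_map_in_subtopology)
    show "x \<in> C \<Longrightarrow> f x = 1" for x using f(3) by auto
    have "closure {x. f x \<noteq> 0} \<subseteq> closure V" using sub closure_mono by blast
    then show "compact (closure {x. f x \<noteq> 0})" using V(3)
      by (metis closed_closure compact_Int_closed inf.absorb_iff2)
    show "closure {x. f x \<noteq> 0} \<subseteq> Op" using V(4) \<open>closure {x. f x \<noteq> 0} \<subseteq> closure V\<close> by blast
  qed
qed

end


definition supp :: "('a::topological_space \<Rightarrow> complex) \<Rightarrow> 'a set" where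
  "supp f = closure {x. f x \<noteq> 0}"

definition CcA :: "'a::topological_space set \<Rightarrow> ('a \<Rightarrow> complex) set" where
  "CcA A = {f. continuous_on UNIV f \<and> compact (supp f) \<and> supp f \<subseteq> A}"

lemma Cc_deg_CcA: "Cc_deg c n = CcA (c -` {n})"
  unfolding Cc_deg_def CcA_def supp_def by auto

lemma supp_sub: "f x \<noteq> 0 \<Longrightarrow> x \<in> supp f"
  unfolding supp_def by (simp add: closure_def)

lemma supp_add: "f1 x + f2 x \<noteq> 0 \<Longrightarrow> x \<notin> supp f2 \<Longrightarrow> x \<in> supp f1"
  by (metis add_0_right add.left_neutral supp_sub)

lemma closed_supp[simp]: "closed (supp f)" unfolding supp_def by simp

context egpd begin

lemma bisect:
  "\<exists>U th. open U \<and> g \<in> U \<and> open (r ` U) \<and> continuous_on (r ` U) th \<and>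
     (\<forall>x\<in>U. th (r x) = x) \<and> (\<forall>y\<in>r ` U. th y \<in> U \<and> r (th y) = y)"
proof -
  obtain U r' where "open U" "g \<in> U" "open (r ` U)" "homeomorphism U (r ` U) r r'"
    using etale by blast
  then show ?thesis unfolding homeomorphism_def by (metis image_eqI)
qed

lemma bisect_open:
  assumes "open U" "open (r ` U)" "continuous_on (r ` U) th" "\<forall>x\<in>U. th (r x) = x"
    "\<forall>y\<in>r ` U. th y \<in> U \<and> r (th y) = y" "open V" "V \<subseteq> U"
  shows "open (r ` V)"
proof -
  have "r ` V = th -` V \<inter> r ` U"
  proof
    show "r ` V \<subseteq> th -` V \<inter> r ` U" using assms by auto
    show "th -` V \<inter> r ` U \<subseteq> r ` V" using assms by (auto intro!: image_eqI)
  qed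
  then show ?thesis using assms continuous_on_open_vimage by metis
qed

lemma finite_fiber:
  assumes "compact K"
  shows "finite {x\<in>K. r x = u}"
proof -
  obtain UU TH where H: "\<And>g. open (UU g) \<and> g \<in> UU g \<and> open (r ` UU g) \<and> continuous_on (r ` UU g) (TH g) \<and>
     (\<forall>x\<in>UU g. TH g (r x) = x) \<and> (\<forall>y\<in>r ` UU g. TH g y \<in> UU g \<and> r (TH g y) = y)"
    using bisect by metis
  obtain T where T: "T \<subseteq> K" "finite T" "K \<subseteq> (\<Union>g\<in>T. UU g)"
    using compactE_image[OF assms, of K UU] H by blast
  have "{x\<in>K. r x = u} \<subseteq> (\<lambda>g. TH g u) ` T"
  proof
    fix x assume "x \<in> {x\<in>K. r x = u}"
    then obtain g where "g \<in> T" "x \<in> UU g" "r x = u" using T by auto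
    then have "x = TH g u" using H by metis
    then show "x \<in> (\<lambda>g. TH g u) ` T" using \<open>g \<in> T\<close> by blast
  qed
  then show ?thesis using T(2) finite_subset by blast
qed

lemma dom_finite:
  assumes "compact (supp f)"
  shows "finite {\<alpha>. r \<alpha> = u \<and> f \<alpha> \<noteq> 0}"
proof -
  have "{\<alpha>. r \<alpha> = u \<and> f \<alpha> \<noteq> 0} \<subseteq> {x\<in>supp f. r x = u}" using supp_sub by auto
  then show ?thesis using finite_fiber[OF assms] finite_subset by blast
qed

lemma conv_eq:
  assumes "finite D" "{\<alpha>. r \<alpha> = r \<gamma> \<and> f \<alpha> \<noteq> 0} \<subseteq> D" "\<forall>\<alpha>\<in>D. r \<alpha> = r \<gamma>"
  shows "conv r m iv f g \<gamma> = (\<Sum>\<alpha>\<in>D. f \<alpha> * g (m (iv \<alpha>) \<gamma>))"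
  unfolding conv_def
  by (rule sum.mono_neutral_left) (use assms in auto)

lemma conv_add1:
  assumes "compact (supp f1)" "compact (supp f2)"
  shows "conv r m iv (\<lambda>x. f1 x + f2 x) g \<gamma> = conv r m iv f1 g \<gamma> + conv r m iv f2 g \<gamma>"
proof -
  define D where "D = {x\<in>supp f1 \<union> supp f2. r x = r \<gamma>}"
  have fD: "finite D" unfolding D_def using finite_fiber[OF compact_Un[OF assms]] by blast
  have "conv r m iv (\<lambda>x. f1 x + f2 x) g \<gamma> = (\<Sum>\<alpha>\<in>D. (f1 \<alpha> + f2 \<alpha>) * g (m (iv \<alpha>) \<gamma>))"
    by (rule conv_eq[OF fD]) (auto simp: D_def dest: supp_add)
  also have "\<dots> = (\<Sum>\<alpha>\<in>D. f1 \<alpha> * g (m (iv \<alpha>) \<gamma>)) + (\<Sum>\<alpha>\<in>D. f2 \<alpha> * g (m (iv \<alpha>) \<gamma>))"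
    by (simp add: distrib_right sum.distrib)
  also have "\<dots> = conv r m iv f1 g \<gamma> + conv r m iv f2 g \<gamma>"
  proof -
    have "conv r m iv f1 g \<gamma> = (\<Sum>\<alpha>\<in>D. f1 \<alpha> * g (m (iv \<alpha>) \<gamma>))"
      by (rule conv_eq[OF fD]) (auto simp: D_def dest: supp_sub)
    moreover have "conv r m iv f2 g \<gamma> = (\<Sum>\<alpha>\<in>D. f2 \<alpha> * g (m (iv \<alpha>) \<gamma>))"
      by (rule conv_eq[OF fD]) (auto simp: D_def dest: supp_sub)
    ultimately show ?thesis by simp
  qed
  finally show ?thesis .
qed

lemma conv_sum2:
  "conv r m iv f (\<lambda>\<gamma>. \<Sum>i<k. a i * g i \<gamma>) \<gamma> = (\<Sum>i<k. a i * conv r m iv f (g i) \<gamma>)"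
proof -
  have "conv r m iv f (\<lambda>\<gamma>. \<Sum>i<k. a i * g i \<gamma>) \<gamma> =
    (\<Sum>\<alpha>\<in>{\<alpha>. r \<alpha> = r \<gamma> \<and> f \<alpha> \<noteq> 0}. \<Sum>i<k. a i * (f \<alpha> * g i (m (iv \<alpha>) \<gamma>)))"
    unfolding conv_def by (simp add: sum_distrib_left mult.left_commute)
  also have "\<dots> = (\<Sum>i<k. \<Sum>\<alpha>\<in>{\<alpha>. r \<alpha> = r \<gamma> \<and> f \<alpha> \<noteq> 0}. a i * (f \<alpha> * g i (m (iv \<alpha>) \<gamma>)))"
    by (rule sum.swap)
  finally show ?thesis unfolding conv_def by (simp add: sum_distrib_left)
qed

lemma conv_zero1: "conv r m iv (\<lambda>_. 0) g \<gamma> = 0"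
  unfolding conv_def by simp

end


lemma compact_sub: "compact K \<Longrightarrow> closed S \<Longrightarrow> S \<subseteq> K \<Longrightarrow> compact S"
  by (metis compact_Int_closed inf.absorb_iff2)

lemma supp_mono: "(\<And>x. g x \<noteq> 0 \<Longrightarrow> f x \<noteq> 0) \<Longrightarrow> supp g \<subseteq> supp f"
  unfolding supp_def by (rule closure_mono) auto

context egpd begin

lemma partition:
  fixes A :: "'g set" and P :: "('g \<Rightarrow> complex) \<Rightarrow> bool" and Nb :: "'g \<Rightarrow> 'g set"
  assumes P0: "P (\<lambda>_. 0)"
  and Padd: "\<And>f1 f2. f1 \<in> CcA A \<Longrightarrow> f2 \<in> CcA A \<Longrightarrow> P f1 \<Longrightarrow> P f2 \<Longrightarrow> P (\<lambda>x. f1 x + f2 x)"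
  and loc: "\<And>x. open (Nb x) \<and> x \<in> Nb x"
  and locP: "\<And>x f. f \<in> CcA A \<Longrightarrow> supp f \<subseteq> Nb x \<Longrightarrow> P f"
  and f: "f \<in> CcA A"
  shows "P f"
proof -
  have main: "finite T \<Longrightarrow> \<forall>f\<in>CcA A. supp f \<subseteq> (\<Union>x\<in>T. Nb x) \<longrightarrow> P f" for T
  proof (induction T rule: finite_induct)
    case empty
    show ?case
    proof (intro ballI impI)
      fix f assume "f \<in> CcA A" "supp f \<subseteq> (\<Union>x\<in>{}. Nb x)"
      then have "f = (\<lambda>_. 0)" using supp_sub[of f] by fastforce
      then show "P f" using P0 by simp
    qed
  next
    case (insert x T)
    show ?case
    proof (intro ballI impI)
      fix f assume fA: "f \<in> CcA A" and sf: "supp f \<subseteq> (\<Union>y\<in>insert x T. Nb y)"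
      define U where "U = (\<Union>y\<in>T. Nb y)"
      have oU: "open U" unfolding U_def using loc by auto
      have cK: "compact (supp f)" and contf: "continuous_on UNIV f" and sA: "supp f \<subseteq> A"
        using fA by (auto simp: CcA_def)
      have cC0: "compact (supp f \<inter> - U)" using cK oU by (simp add: compact_Int_closed closed_Compl)
      have C0O: "supp f \<inter> - U \<subseteq> Nb x" using sf by (auto simp: U_def)
      obtain V where V: "open V" "supp f \<inter> - U \<subseteq> V" "compact (closure V)" "closure V \<subseteq> Nb x"
        using shrink[OF cC0 _ C0O] loc by blast
      obtain \<phi> :: "'g \<Rightarrow> real" where ph: "continuous_on UNIV \<phi>" "\<And>y. 0 \<le> \<phi> y \<and> \<phi> y \<le> 1"
        "\<And>y. y \<in> closure V \<Longrightarrow> \<phi> y = 1" "compact (closure {y. \<phi> y \<noteq> 0})" "closure {y. \<phi> y \<noteq> 0} \<subseteq> Nb x"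
        using bump[OF V(3) _ V(4)] loc by blast
      define f1 where "f1 = (\<lambda>y. complex_of_real (\<phi> y) * f y)"
      define f2 where "f2 = (\<lambda>y. complex_of_real (1 - \<phi> y) * f y)"
      have cf1: "continuous_on UNIV f1" unfolding f1_def
        by (intro continuous_intros ph(1) contf)
      have cf2: "continuous_on UNIV f2" unfolding f2_def
        by (intro continuous_intros ph(1) contf)
      have s1: "supp f1 \<subseteq> supp f" "supp f2 \<subseteq> supp f"
        by (auto intro!: supp_mono simp: f1_def f2_def)
      have s1O: "supp f1 \<subseteq> closure {y. \<phi> y \<noteq> 0}"
        unfolding supp_def f1_def by (rule closure_mono) auto
      have "{y. f2 y \<noteq> 0} \<subseteq> supp f \<inter> - V"
        using ph(3) closure_subset[of V] by (auto simp: f2_def intro: supp_sub)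
      then have s2U: "supp f2 \<subseteq> supp f \<inter> - V" unfolding supp_def
        using V(1) by (intro closure_minimal) (auto simp: supp_def[symmetric] closed_Compl)
      have f1A: "f1 \<in> CcA A" using s1 cf1 cK sA unfolding CcA_def
        by (auto intro: compact_sub)
      have f2A: "f2 \<in> CcA A" using s1 cf2 cK sA unfolding CcA_def
        by (auto intro: compact_sub)
      have P1: "P f1" using locP[OF f1A, of x] s1O ph(5) by (meson order_trans)
      have "supp f2 \<subseteq> U" using s2U V(2) by blast
      then have P2: "P f2" using insert.IH f2A unfolding U_def by blast
      have "f = (\<lambda>y. f1 y + f2 y)"
        by (rule ext) (simp add: f1_def f2_def algebra_simps)
      then show "P f" using Padd[OF f1A f2A P1 P2] by simp
    qed
  qed
  have "compact (supp f)" using f by (simp add: CcA_def)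
  then obtain T where "T \<subseteq> supp f" "finite T" "supp f \<subseteq> (\<Union>x\<in>T. Nb x)"
    using compactE_image[of "supp f" "supp f" Nb] loc by blast
  then show ?thesis using main[of T] f by blast
qed

end


lemma CcA_zero: "(\<lambda>_. 0) \<in> CcA A"
  unfolding CcA_def supp_def by simp

lemma CcA_UNIV: "f \<in> CcA A \<Longrightarrow> f \<in> CcA UNIV"
  unfolding CcA_def by auto

lemma supp_add_sub: "supp (\<lambda>x. f x + g x) \<subseteq> supp f \<union> supp g"
proof -
  have "{x. f x + g x \<noteq> 0} \<subseteq> {x. f x \<noteq> 0} \<union> {x. g x \<noteq> 0}" by auto
  then show ?thesis unfolding supp_def by (metis closure_Un closure_mono)
qed

lemma CcA_add: "f \<in> CcA A \<Longrightarrow> g \<in> CcA A \<Longrightarrow> (\<lambda>x. f x + g x) \<in> CcA A"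
  unfolding CcA_def using supp_add_sub[of f g]
  by (auto intro!: continuous_intros intro: compact_sub[OF compact_Un])

lemma CcA_scale: "f \<in> CcA A \<Longrightarrow> (\<lambda>x. a * f x) \<in> CcA A"
proof -
  assume "f \<in> CcA A"
  moreover have "supp (\<lambda>x. a * f x) \<subseteq> supp f" by (rule supp_mono) simp
  ultimately show ?thesis unfolding CcA_def
    by (auto intro!: continuous_intros intro: compact_sub)
qed

lemma CcA_sum: "(\<And>i. i < (k::nat) \<Longrightarrow> g i \<in> CcA A) \<Longrightarrow> (\<lambda>\<gamma>. \<Sum>i<k. a i * g i \<gamma>) \<in> CcA A"
proof (induction k)
  case 0
  then show ?case using CcA_zero by simp
next
  case (Suc k)
  then show ?case by (simp add: CcA_add CcA_scale)
qed

context egpd begin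

lemma conv_local:
  assumes oU: "open U" and orU: "open (r ` U)" and cth: "continuous_on (r ` U) th"
    and th1: "\<forall>x\<in>U. th (r x) = x" and th2: "\<forall>y\<in>r ` U. th y \<in> U \<and> r (th y) = y"
    and cf: "continuous_on UNIV f" and kf: "compact (supp f)" and sU: "supp f \<subseteq> U"
    and cg: "continuous_on UNIV g"
  shows "continuous_on UNIV (conv r m iv f g)"
proof -
  define h where "h \<gamma> = (if r \<gamma> \<in> r ` U then f (th (r \<gamma>)) * g (m (iv (th (r \<gamma>))) \<gamma>) else 0)" for \<gamma>
  have eq: "conv r m iv f g \<gamma> = h \<gamma>" for \<gamma>
  proof (cases "r \<gamma> \<in> r ` U")
    case True
    have "conv r m iv f g \<gamma> = (\<Sum>\<alpha>\<in>{th (r \<gamma>)}. f \<alpha> * g (m (iv \<alpha>) \<gamma>))"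
    proof (rule conv_eq)
      show "{\<alpha>. r \<alpha> = r \<gamma> \<and> f \<alpha> \<noteq> 0} \<subseteq> {th (r \<gamma>)}"
        using sU th1 supp_sub[of f] by force
      show "\<forall>\<alpha>\<in>{th (r \<gamma>)}. r \<alpha> = r \<gamma>" using th2 True by auto
    qed simp
    then show ?thesis using True by (simp add: h_def)
  next
    case False
    have "{\<alpha>. r \<alpha> = r \<gamma> \<and> f \<alpha> \<noteq> 0} = {}"
    proof -
      { fix \<alpha> assume a: "r \<alpha> = r \<gamma>" "f \<alpha> \<noteq> 0"
        then have "\<alpha> \<in> U" using sU supp_sub by blast
        then have "r \<gamma> \<in> r ` U" using a by (metis image_eqI)
        with False have False by simp }
      then show ?thesis by blast
    qed
    then show ?thesis using False by (simp add: h_def conv_def)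
  qed
  define A1 where "A1 = r -` (r ` U)"
  define A2 where "A2 = - (r -` (r ` supp f))"
  have oA1: "open A1" unfolding A1_def
    using cont_r orU continuous_on_open_vimage[of UNIV r] by auto
  have "compact (r ` supp f)"
    using kf cont_r by (meson compact_continuous_image continuous_on_subset subset_UNIV)
  then have "closed (r -` (r ` supp f))"
    using cont_r continuous_on_closed_vimage[of UNIV r] compact_imp_closed by auto
  then have oA2: "open A2" unfolding A2_def by (simp add: open_Compl)
  have c1: "continuous_on A1 h"
  proof -
    have ct: "continuous_on A1 (\<lambda>\<gamma>. th (r \<gamma>))"
      by (rule continuous_on_compose2[OF cth continuous_on_subset[OF cont_r]]) (auto simp: A1_def)
    have cpair: "continuous_on A1 (\<lambda>\<gamma>. (iv (th (r \<gamma>)), \<gamma>))"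
      by (intro continuous_intros continuous_on_compose2[OF cont_iv ct]) auto
    have sub: "(\<lambda>\<gamma>. (iv (th (r \<gamma>)), \<gamma>)) ` A1 \<subseteq> {(g, h). s g = r h}"
      using th2 by (auto simp: A1_def)
    have cm: "continuous_on A1 (\<lambda>\<gamma>. m (iv (th (r \<gamma>))) \<gamma>)"
      using continuous_on_compose2[OF cont_m cpair sub] by simp
    have "continuous_on A1 (\<lambda>\<gamma>. f (th (r \<gamma>)) * g (m (iv (th (r \<gamma>))) \<gamma>))"
      by (intro continuous_intros continuous_on_compose2[OF cf ct] continuous_on_compose2[OF cg cm]) auto
    then show ?thesis by (rule continuous_on_cong[THEN iffD1, rotated 2]) (auto simp: h_def A1_def)
  qed
  have c2: "continuous_on A2 h"
  proof -
    have "h \<gamma> = 0" if "\<gamma> \<in> A2" for \<gamma>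
    proof (rule ccontr)
      assume "h \<gamma> \<noteq> 0"
      then have "r \<gamma> \<in> r ` U" "f (th (r \<gamma>)) \<noteq> 0" by (auto simp: h_def split: if_splits)
      then have "th (r \<gamma>) \<in> supp f" "r (th (r \<gamma>)) = r \<gamma>" using supp_sub th2 by auto
      then have "r \<gamma> \<in> r ` supp f" by (metis image_eqI)
      then show False using that by (simp add: A2_def)
    qed
    then have "continuous_on A2 h \<longleftrightarrow> continuous_on A2 (\<lambda>_. 0::complex)"
      by (intro continuous_on_cong) auto
    then show ?thesis by simp
  qed
  have "A1 \<union> A2 = UNIV" using sU by (auto simp: A1_def A2_def)
  then have "continuous_on UNIV h" using continuous_on_open_Un[OF oA1 oA2 c1 c2] by simp
  then show ?thesis using eq by (metis ext)
qed

lemma conv_cont: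
  assumes f: "f \<in> CcA UNIV" and cg: "continuous_on UNIV g"
  shows "continuous_on UNIV (conv r m iv f g)"
proof -
  obtain UU TH where H: "\<And>x. open (UU x) \<and> x \<in> UU x \<and> open (r ` UU x) \<and> continuous_on (r ` UU x) (TH x) \<and>
     (\<forall>y\<in>UU x. TH x (r y) = y) \<and> (\<forall>y\<in>r ` UU x. TH x y \<in> UU x \<and> r (TH x y) = y)"
    using bisect by metis
  show ?thesis
  proof (rule partition[where P = "\<lambda>f. continuous_on UNIV (conv r m iv f g)" and Nb = UU and A = UNIV])
    show "continuous_on UNIV (conv r m iv (\<lambda>_. 0) g)" by (simp add: conv_zero1)
    show "continuous_on UNIV (conv r m iv (\<lambda>x. f1 x + f2 x) g)"
      if "f1 \<in> CcA UNIV" "f2 \<in> CcA UNIV" "continuous_on UNIV (conv r m iv f1 g)"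
        "continuous_on UNIV (conv r m iv f2 g)" for f1 f2
    proof -
      have "conv r m iv (\<lambda>x. f1 x + f2 x) g = (\<lambda>\<gamma>. conv r m iv f1 g \<gamma> + conv r m iv f2 g \<gamma>)"
        using conv_add1 that(1,2) by (auto simp: CcA_def)
      then show ?thesis using that(3,4) by (simp add: continuous_on_add)
    qed
    show "open (UU x) \<and> x \<in> UU x" for x using H by auto
    show "continuous_on UNIV (conv r m iv f g)" if "f \<in> CcA UNIV" "supp f \<subseteq> UU x" for x f
      using conv_local[of "UU x" "TH x" f g] H that cg by (auto simp: CcA_def)
  qed (rule f)
qed

lemma conv_supp:
  assumes "compact (supp f)" "compact (supp g)"
  defines "M \<equiv> (\<lambda>(x, y). m x y) ` ((supp f \<times> supp g) \<inter> {(x, y). s x = r y})"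
  shows "{\<gamma>. conv r m iv f g \<gamma> \<noteq> 0} \<subseteq> M" "compact M"
proof -
  show "{\<gamma>. conv r m iv f g \<gamma> \<noteq> 0} \<subseteq> M"
  proof
    fix \<gamma> assume "\<gamma> \<in> {\<gamma>. conv r m iv f g \<gamma> \<noteq> 0}"
    then have ne: "conv r m iv f g \<gamma> \<noteq> 0" by simp
    have "\<exists>\<alpha>\<in>{\<alpha>. r \<alpha> = r \<gamma> \<and> f \<alpha> \<noteq> 0}. f \<alpha> * g (m (iv \<alpha>) \<gamma>) \<noteq> 0"
    proof (rule ccontr)
      assume "\<not> ?thesis"
      then have "conv r m iv f g \<gamma> = 0" unfolding conv_def by (intro sum.neutral) blast
      with ne show False by simp
    qed
    then obtain \<alpha> where a: "r \<alpha> = r \<gamma>" "f \<alpha> \<noteq> 0" "g (m (iv \<alpha>) \<gamma>) \<noteq> 0"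
      by auto
    have "m \<alpha> (m (iv \<alpha>) \<gamma>) = m (m \<alpha> (iv \<alpha>)) \<gamma>" by (rule assoc[symmetric]) (simp_all add: a)
    also have "\<dots> = \<gamma>" using a by simp
    finally have eq: "m \<alpha> (m (iv \<alpha>) \<gamma>) = \<gamma>" .
    have "(\<alpha>, m (iv \<alpha>) \<gamma>) \<in> (supp f \<times> supp g) \<inter> {(x, y). s x = r y}"
      using a supp_sub by auto
    then have "(\<lambda>(x, y). m x y) (\<alpha>, m (iv \<alpha>) \<gamma>) \<in> M" unfolding M_def by (rule imageI)
    then show "\<gamma> \<in> M" using eq by simp
  qed
  have "closed {(x, y). s x = r y}"
  proof -
    have c1: "continuous_on UNIV (\<lambda>p::'g\<times>'g. s (fst p))"
      by (rule continuous_on_compose2[OF cont_s continuous_on_fst[OF continuous_on_id]]) auto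
    have c2: "continuous_on UNIV (\<lambda>p::'g\<times>'g. r (snd p))"
      by (rule continuous_on_compose2[OF cont_r continuous_on_snd[OF continuous_on_id]]) auto
    have "closed {p::'g\<times>'g. s (fst p) = r (snd p)}"
      by (rule closed_Collect_eq[OF c1 c2])
    then show ?thesis by (simp add: case_prod_unfold)
  qed
  then have "compact ((supp f \<times> supp g) \<inter> {(x, y). s x = r y})"
    using assms(1,2) by (simp add: compact_Int_closed compact_Times)
  moreover have "continuous_on ((supp f \<times> supp g) \<inter> {(x, y). s x = r y}) (\<lambda>(x, y). m x y)"
    by (rule continuous_on_subset[OF cont_m]) auto
  ultimately show "compact M" unfolding M_def using compact_continuous_image by blast
qed

lemma conv_Cc:
  assumes f: "f \<in> CcA (c -` {a})" and g: "g \<in> CcA (c -` {b})"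
  shows "conv r m iv f g \<in> CcA (c -` {a + b})"
proof -
  have kf: "compact (supp f)" and kg: "compact (supp g)" using f g by (auto simp: CcA_def)
  define M where "M \<equiv> (\<lambda>(x, y). m x y) ` ((supp f \<times> supp g) \<inter> {(x, y). s x = r y})"
  have sub: "{\<gamma>. conv r m iv f g \<gamma> \<noteq> 0} \<subseteq> M" and kM: "compact M"
    using conv_supp[OF kf kg] unfolding M_def by auto
  have "supp (conv r m iv f g) \<subseteq> M" unfolding supp_def
    using sub kM by (simp add: closure_minimal compact_imp_closed)
  moreover have "M \<subseteq> c -` {a + b}"
  proof
    fix z assume "z \<in> M"
    then obtain x y where xy: "x \<in> supp f" "y \<in> supp g" "s x = r y" "z = m x y" unfolding M_def by auto
    have "c x = a" "c y = b" using xy f g unfolding CcA_def by auto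
    then show "z \<in> c -` {a + b}" using xy by (simp add: cmul)
  qed
  moreover have "continuous_on UNIV (conv r m iv f g)"
    using conv_cont[OF CcA_UNIV[OF f]] g by (simp add: CcA_def)
  ultimately show ?thesis using kM unfolding CcA_def by (auto intro: compact_sub)
qed

end


lemma sum_split_nat: "(\<Sum>i<k1+k2. h i) = (\<Sum>i<k1. h i) + (\<Sum>i<(k2::nat). h (k1+i))"
  by (induct k2) (simp_all add: add.assoc)

lemma conv_list_cons: "F \<noteq> [] \<Longrightarrow> conv_list r m iv (h # F) = conv r m iv h (conv_list r m iv F)"
  by (cases F) simp_all

lemma span_intro:
  assumes "f = (\<lambda>\<gamma>. \<Sum>i<(k::nat). a i * conv_list r m iv (F i) \<gamma>)"
    "\<forall>i<k. length (F i) = n \<and> (\<forall>f\<in>set (F i). f \<in> Cc_deg c 1)"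
  shows "f \<in> prod_span r m iv c n"
  unfolding prod_span_def using assms by (intro CollectI exI[of _ k] exI[of _ a] exI[of _ F]) simp

lemma span_elim:
  assumes "f \<in> prod_span r m iv c n"
  obtains k :: nat and a F where "f = (\<lambda>\<gamma>. \<Sum>i<k. a i * conv_list r m iv (F i) \<gamma>)"
    "\<forall>i<k. length (F i) = n \<and> (\<forall>f\<in>set (F i). f \<in> Cc_deg c 1)"
  using assms unfolding prod_span_def by auto

lemma span_zero: "(\<lambda>_. 0) \<in> prod_span r m iv c n"
  unfolding prod_span_def by (rule CollectI, rule exI[of _ 0]) simp

lemma span_add:
  assumes "f1 \<in> prod_span r m iv c n" "f2 \<in> prod_span r m iv c n"
  shows "(\<lambda>x. f1 x + f2 x) \<in> prod_span r m iv c n"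
proof -
  obtain k1 :: nat and a1 F1 where 1: "f1 = (\<lambda>\<gamma>. \<Sum>i<k1. a1 i * conv_list r m iv (F1 i) \<gamma>)"
    "\<forall>i<k1. length (F1 i) = n \<and> (\<forall>f\<in>set (F1 i). f \<in> Cc_deg c 1)"
    using assms(1) by (rule span_elim)
  obtain k2 :: nat and a2 F2 where 2: "f2 = (\<lambda>\<gamma>. \<Sum>i<k2. a2 i * conv_list r m iv (F2 i) \<gamma>)"
    "\<forall>i<k2. length (F2 i) = n \<and> (\<forall>f\<in>set (F2 i). f \<in> Cc_deg c 1)"
    using assms(2) by (rule span_elim)
  define a where "a i = (if i < k1 then a1 i else a2 (i - k1))" for i
  define F where "F i = (if i < k1 then F1 i else F2 (i - k1))" for i
  have "(\<lambda>x. f1 x + f2 x) = (\<lambda>\<gamma>. \<Sum>i<k1+k2. a i * conv_list r m iv (F i) \<gamma>)"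
    unfolding 1 2 sum_split_nat by (simp add: a_def F_def)
  moreover have "\<forall>i<k1+k2. length (F i) = n \<and> (\<forall>f\<in>set (F i). f \<in> Cc_deg c 1)"
  proof (intro allI impI)
    fix i assume i: "i < k1 + k2"
    show "length (F i) = n \<and> (\<forall>f\<in>set (F i). f \<in> Cc_deg c 1)"
    proof (cases "i < k1")
      case True then show ?thesis using 1(2) by (simp add: F_def)
    next
      case False then have "i - k1 < k2" using i by simp
      then show ?thesis using 2(2) False by (simp add: F_def)
    qed
  qed
  ultimately show ?thesis by (rule span_intro)
qed

lemma span_sum:
  "(\<And>i. i < (k::nat) \<Longrightarrow> g i \<in> prod_span r m iv c n) \<Longrightarrow> (\<lambda>\<gamma>. \<Sum>i<k. g i \<gamma>) \<in> prod_span r m iv c n"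
proof (induction k)
  case 0 then show ?case using span_zero by simp
next
  case (Suc k) then show ?case using span_add[of "\<lambda>\<gamma>. \<Sum>i<k. g i \<gamma>" r m iv c n "g k"] by simp
qed

lemma span_base:
  assumes "f \<in> Cc_deg c 1"
  shows "f \<in> prod_span r m iv c 1"
proof -
  have "f = (\<lambda>\<gamma>. \<Sum>i<(1::nat). (\<lambda>_. 1) i * conv_list r m iv ((\<lambda>_. [f]) i) \<gamma>)" by simp
  moreover have "\<forall>i<(1::nat). length ((\<lambda>_. [f]) i) = 1 \<and> (\<forall>g\<in>set ((\<lambda>_. [f]) i). g \<in> Cc_deg c 1)"
    using assms by simp
  ultimately show ?thesis by (rule span_intro)
qed

lemma involution_inv[simp]: "involution iv (involution iv f) = (\<lambda>x. f (iv (iv x)))"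
  unfolding involution_def by simp

context egpd begin

lemma span_step:
  assumes g: "g \<in> prod_span r m iv c n" and n: "n \<ge> 1" and h: "h \<in> Cc_deg c 1"
  shows "conv r m iv h g \<in> prod_span r m iv c (Suc n)"
proof -
  obtain k :: nat and a F where 1: "g = (\<lambda>\<gamma>. \<Sum>i<k. a i * conv_list r m iv (F i) \<gamma>)"
    "\<forall>i<k. length (F i) = n \<and> (\<forall>f\<in>set (F i). f \<in> Cc_deg c 1)"
    using g by (rule span_elim)
  have "conv r m iv h g = (\<lambda>\<gamma>. \<Sum>i<k. a i * conv_list r m iv (h # F i) \<gamma>)"
  proof
    fix \<gamma>
    have "conv r m iv h g \<gamma> = (\<Sum>i<k. a i * conv r m iv h (conv_list r m iv (F i)) \<gamma>)"
      unfolding 1(1) by (rule conv_sum2)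
    also have "\<dots> = (\<Sum>i<k. a i * conv_list r m iv (h # F i) \<gamma>)"
    proof (rule sum.cong[OF refl])
      fix i assume "i \<in> {..<k}"
      then have "F i \<noteq> []" using 1(2) n by auto
      then show "a i * conv r m iv h (conv_list r m iv (F i)) \<gamma> = a i * conv_list r m iv (h # F i) \<gamma>"
        by (simp add: conv_list_cons)
    qed
    finally show "conv r m iv h g \<gamma> = (\<Sum>i<k. a i * conv_list r m iv (h # F i) \<gamma>)" .
  qed
  moreover have "\<forall>i<k. length (h # F i) = Suc n \<and> (\<forall>f\<in>set (h # F i). f \<in> Cc_deg c 1)"
    using 1(2) h by simp
  ultimately show ?thesis by (rule span_intro)
qed

lemma conv_list_Cc:
  "F \<noteq> [] \<Longrightarrow> \<forall>f\<in>set F. f \<in> CcA (c -` {1}) \<Longrightarrow> conv_list r m iv F \<in> CcA (c -` {int (length F)})"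
proof (induction F)
  case Nil then show ?case by simp
next
  case (Cons f F)
  show ?case
  proof (cases "F = []")
    case True then show ?thesis using Cons by simp
  next
    case False
    have "f \<in> CcA (c -` {1})" using Cons by simp
    moreover have "conv_list r m iv F \<in> CcA (c -` {int (length F)})" using Cons False by simp
    ultimately have "conv r m iv f (conv_list r m iv F) \<in> CcA (c -` {1 + int (length F)})"
      by (rule conv_Cc)
    then show ?thesis using False by (simp add: conv_list_cons add.commute)
  qed
qed

lemma span_sub:
  assumes "f \<in> prod_span r m iv c n" "n > 0"
  shows "f \<in> Cc_deg c (int n)"
proof -
  obtain k :: nat and a F where 1: "f = (\<lambda>\<gamma>. \<Sum>i<k. a i * conv_list r m iv (F i) \<gamma>)"
    "\<forall>i<k. length (F i) = n \<and> (\<forall>f\<in>set (F i). f \<in> Cc_deg c 1)"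
    using assms(1) by (rule span_elim)
  have "conv_list r m iv (F i) \<in> CcA (c -` {int n})" if "i < k" for i
    using conv_list_Cc[of "F i"] 1(2) that assms(2) unfolding Cc_deg_CcA by auto
  then show ?thesis unfolding 1(1) Cc_deg_CcA by (rule CcA_sum)
qed

lemma inv_in:
  assumes f: "f \<in> CcA (c -` {k})"
  shows "involution iv f \<in> CcA (c -` {- k})"
proof -
  have kf: "compact (supp f)" and cf: "continuous_on UNIV f" and sf: "supp f \<subseteq> c -` {k}"
    using f by (auto simp: CcA_def)
  have ki: "compact (iv ` supp f)"
    using kf cont_iv by (meson compact_continuous_image continuous_on_subset subset_UNIV)
  have "{x. involution iv f x \<noteq> 0} \<subseteq> iv ` supp f"
  proof
    fix x assume "x \<in> {x. involution iv f x \<noteq> 0}"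
    then have "f (iv x) \<noteq> 0" by (simp add: involution_def)
    then have "iv x \<in> supp f" by (rule supp_sub)
    then show "x \<in> iv ` supp f" by (metis iviv image_eqI)
  qed
  moreover have "closed (iv ` supp f)" using ki by (rule compact_imp_closed)
  ultimately have ss: "supp (involution iv f) \<subseteq> iv ` supp f"
    unfolding supp_def[of "involution iv f"] by (rule closure_minimal)
  have "iv ` supp f \<subseteq> c -` {- k}" using sf by auto
  moreover have "continuous_on UNIV (involution iv f)" unfolding involution_def
    by (intro continuous_intros continuous_on_compose2[OF cf cont_iv]) auto
  ultimately show ?thesis using ss ki unfolding CcA_def by (auto intro: compact_sub)
qed

lemma inv_image: "involution iv ` Cc_deg c k = Cc_deg c (- k)"
proof
  show "involution iv ` Cc_deg c k \<subseteq> Cc_deg c (- k)"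
    unfolding Cc_deg_CcA using inv_in by blast
  show "Cc_deg c (- k) \<subseteq> involution iv ` Cc_deg c k"
  proof
    fix f assume "f \<in> Cc_deg c (- k)"
    then have "involution iv f \<in> Cc_deg c k" unfolding Cc_deg_CcA using inv_in[of f "- k"] by simp
    moreover have "f = involution iv (involution iv f)" by simp
    ultimately show "f \<in> involution iv ` Cc_deg c k" by blast
  qed
qed

lemma list_prod_r:
  "composable_list r s (a # xs) \<Longrightarrow> r (list_prod m a xs) = r a"
proof (induction xs arbitrary: a)
  case Nil then show ?case by simp
next
  case (Cons b bs)
  then have sab: "s a = r b" and cb: "composable_list r s (b # bs)" by simp_all
  have "composable_list r s (m a b # bs)"
  proof (cases bs)
    case Nil then show ?thesis by simp
  next
    case (Cons x xs) then show ?thesis using cb sab by simp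
  qed
  then have "r (list_prod m (m a b) bs) = r (m a b)" by (rule Cons.IH)
  then show ?case using sab by simp
qed

end


context egpd begin

lemma local_density:
  assumes IH: "CcA (c -` {int n}) \<subseteq> prod_span r m iv c n" and n1: "n \<ge> 1"
    and unp: "unperforated r s m c"
  shows "\<exists>Op. open Op \<and> \<gamma> \<in> Op \<and>
     (\<forall>f \<in> CcA (c -` {int (Suc n)}). supp f \<subseteq> Op \<longrightarrow> f \<in> prod_span r m iv c (Suc n))"
proof (cases "c \<gamma> = int (Suc n)")
  case False
  show ?thesis
  proof (intro exI conjI ballI impI)
    show "open (c -` {c \<gamma>})" by (rule open_c)
    show "\<gamma> \<in> c -` {c \<gamma>}" by simp
    fix f assume f: "f \<in> CcA (c -` {int (Suc n)})" "supp f \<subseteq> c -` {c \<gamma>}"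
    have "supp f \<subseteq> c -` {int (Suc n)}" using f(1) by (simp add: CcA_def)
    moreover
    { fix x assume x: "x \<in> supp f"
      then have "c x = c \<gamma>" using f(2) by blast
      moreover have "c x = int (Suc n)" using x \<open>supp f \<subseteq> c -` {int (Suc n)}\<close> by blast
      ultimately have False using False by simp }
    ultimately have "supp f = {}" by blast
    then have "f = (\<lambda>_. 0)" using supp_sub[of f] by fastforce
    then show "f \<in> prod_span r m iv c (Suc n)" using span_zero by simp
  qed
next
  case True
  obtain gs where gs: "length gs = Suc n" "composable_list r s gs" "\<forall>x\<in>set gs. c x = 1"
    "\<gamma> = list_prod m (hd gs) (tl gs)"
    using unp True unfolding unperforated_def by (metis zero_less_Suc)
  then obtain \<alpha> rest where gs': "gs = \<alpha> # rest" by (cases gs) auto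
  have ra: "r \<gamma> = r \<alpha>" using gs gs' list_prod_r by simp
  have ca: "c \<alpha> = 1" using gs gs' by simp
  obtain U1 th1 where U1: "open U1" "\<alpha> \<in> U1" "open (r ` U1)" "continuous_on (r ` U1) th1"
     "\<forall>x\<in>U1. th1 (r x) = x" "\<forall>y\<in>r ` U1. th1 y \<in> U1 \<and> r (th1 y) = y"
    using bisect by blast
  obtain U2 th2 where U2: "open U2" "iv \<alpha> \<in> U2" "open (r ` U2)" "continuous_on (r ` U2) th2"
     "\<forall>x\<in>U2. th2 (r x) = x" "\<forall>y\<in>r ` U2. th2 y \<in> U2 \<and> r (th2 y) = y"
    using bisect by blast
  define W where "W = U1 \<inter> iv -` U2 \<inter> c -` {1}"
  have oivU2: "open (iv -` U2)" using cont_iv U2(1) continuous_on_open_vimage[of UNIV iv] by auto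
  have oW: "open W" unfolding W_def using U1(1) oivU2 open_c by auto
  have aW: "\<alpha> \<in> W" unfolding W_def using U1 U2 ca by simp
  have WU1: "W \<subseteq> U1" unfolding W_def by auto
  have orW: "open (r ` W)" by (rule bisect_open[OF U1(1,3,4,5,6) oW WU1])
  have ivW: "iv ` W = iv -` W"
    by (auto simp: image_iff) (metis iviv)
  have ivWU2: "iv ` W \<subseteq> U2" unfolding W_def by auto
  have sW: "s ` W = r ` (iv ` W)" by (auto simp: image_iff)
  have osW: "open (s ` W)" unfolding sW
    by (rule bisect_open[OF U2(1,3,4,5,6)]) (use oW cont_iv continuous_on_open_vimage[of UNIV iv] ivW ivWU2 in auto)
  define sg where "sg y = iv (th2 y)" for y
  have sg1: "\<forall>x\<in>W. sg (s x) = x"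
  proof
    fix x assume "x \<in> W"
    then have "iv x \<in> U2" unfolding W_def by auto
    then have "th2 (r (iv x)) = iv x" using U2(5) by blast
    then show "sg (s x) = x" by (simp add: sg_def)
  qed
  have sg2: "\<forall>y\<in>s ` W. sg y \<in> W \<and> s (sg y) = y" using sg1 by auto
  have csg: "continuous_on (s ` W) sg" unfolding sg_def
  proof (rule continuous_on_compose2[OF cont_iv])
    have "s ` W \<subseteq> r ` U2" unfolding sW using ivWU2 by auto
    then show "continuous_on (s ` W) th2" using U2(4) continuous_on_subset by blast
  qed auto
  have th1W: "\<forall>x\<in>W. th1 (r x) = x" using U1(5) WU1 by auto
  have th2W: "\<forall>y\<in>r ` W. th1 y \<in> W \<and> r (th1 y) = y" using th1W by auto
  have cth1: "continuous_on (r ` W) th1" using U1(4) continuous_on_subset WU1 by (metis image_mono)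
  define Op where "Op = c -` {int (Suc n)} \<inter> r -` (r ` W)"
  have oOp: "open Op" unfolding Op_def
    using open_c orW cont_r continuous_on_open_vimage[of UNIV r] by auto
  have gOp: "\<gamma> \<in> Op" unfolding Op_def using True ra aW by auto
  show ?thesis
  proof (intro exI conjI ballI impI)
    show "open Op" "\<gamma> \<in> Op" using oOp gOp by auto
    fix f assume f: "f \<in> CcA (c -` {int (Suc n)})" and sfO: "supp f \<subseteq> Op"
    define K where "K = supp f"
    have kK: "compact K" and cf: "continuous_on UNIV f" using f by (auto simp: CcA_def K_def)
    have KO: "K \<subseteq> Op" using sfO by (simp add: K_def)
    have rKW: "r ` K \<subseteq> r ` W" using KO unfolding Op_def by auto
    have krK: "compact (r ` K)"
      using kK cont_r by (meson compact_continuous_image continuous_on_subset subset_UNIV)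
    define L where "L = th1 ` r ` K"
    have kL: "compact L" unfolding L_def
      using compact_continuous_image[OF continuous_on_subset[OF cth1 rKW] krK] .
    have LW: "L \<subseteq> W" unfolding L_def using rKW th2W by auto
    obtain \<phi> :: "'g \<Rightarrow> real" where ph: "continuous_on UNIV \<phi>" "\<And>y. 0 \<le> \<phi> y \<and> \<phi> y \<le> 1"
        "\<And>y. y \<in> L \<Longrightarrow> \<phi> y = 1" "compact (closure {y. \<phi> y \<noteq> 0})" "closure {y. \<phi> y \<noteq> 0} \<subseteq> W"
      using bump[OF kL oW LW] by blast
    define h where "h x = complex_of_real (\<phi> x)" for x
    have supph: "supp h = closure {y. \<phi> y \<noteq> 0}" unfolding supp_def h_def by simp
    have hC: "h \<in> CcA (c -` {1})"
    proof -
      have "continuous_on UNIV h" unfolding h_def by (intro continuous_intros ph(1))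
      moreover have "W \<subseteq> c -` {1}" unfolding W_def by auto
      ultimately show ?thesis unfolding CcA_def using supph ph(4,5) by auto
    qed
    define Phi where "Phi k = m (iv (th1 (r k))) k" for k
    define A1 where "A1 = r -` (r ` W)"
    have ct: "continuous_on A1 (\<lambda>\<gamma>. th1 (r \<gamma>))"
      by (rule continuous_on_compose2[OF cth1 continuous_on_subset[OF cont_r]]) (auto simp: A1_def)
    have cpair: "continuous_on A1 (\<lambda>\<gamma>. (iv (th1 (r \<gamma>)), \<gamma>))"
      by (intro continuous_intros continuous_on_compose2[OF cont_iv ct]) auto
    have subc: "(\<lambda>\<gamma>. (iv (th1 (r \<gamma>)), \<gamma>)) ` A1 \<subseteq> {(g, h). s g = r h}"
      using th2W by (auto simp: A1_def)
    have cPhi: "continuous_on A1 Phi"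
      using continuous_on_compose2[OF cont_m cpair subc] by (simp add: Phi_def)
    have KA1: "K \<subseteq> A1" using KO by (auto simp: Op_def A1_def)
    have kPK: "compact (Phi ` K)"
      using compact_continuous_image[OF continuous_on_subset[OF cPhi KA1] kK] .
    define g where "g \<delta> = (if r \<delta> \<in> s ` W then f (m (sg (r \<delta>)) \<delta>) else 0)" for \<delta>
    have gsub: "{\<delta>. g \<delta> \<noteq> 0} \<subseteq> Phi ` K"
    proof
      fix \<delta> assume "\<delta> \<in> {\<delta>. g \<delta> \<noteq> 0}"
      then have d1: "r \<delta> \<in> s ` W" and d2: "f (m (sg (r \<delta>)) \<delta>) \<noteq> 0"
        by (auto simp: g_def split: if_splits)
      define a where "a = sg (r \<delta>)"
      have aW': "a \<in> W" and sa: "s a = r \<delta>" using sg2 d1 by (auto simp: a_def)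
      define k where "k = m a \<delta>"
      have kK': "k \<in> K" using d2 supp_sub by (simp add: k_def a_def K_def)
      have rk: "r k = r a" using sa by (simp add: k_def)
      have "th1 (r k) = a" using rk th1W aW' by simp
      then have "Phi k = m (iv a) (m a \<delta>)" by (simp add: Phi_def k_def)
      also have "\<dots> = m (m (iv a) a) \<delta>" by (rule assoc[symmetric]) (simp_all add: sa)
      also have "\<dots> = \<delta>" using sa by simp
      finally show "\<delta> \<in> Phi ` K" using kK' by (metis image_eqI)
    qed
    have PhiK_c: "Phi ` K \<subseteq> c -` {int n}"
    proof
      fix z assume "z \<in> Phi ` K"
      then obtain k where k: "k \<in> K" "z = Phi k" by auto
      then have rkW: "r k \<in> r ` W" using rKW by auto
      then have "th1 (r k) \<in> W" "r (th1 (r k)) = r k" using th2W by auto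
      then have "c (th1 (r k)) = 1" by (auto simp: W_def)
      moreover have "c k = int (Suc n)" using k KO by (auto simp: Op_def)
      moreover have "s (iv (th1 (r k))) = r k" using \<open>r (th1 (r k)) = r k\<close> by simp
      ultimately show "z \<in> c -` {int n}" using k by (simp add: Phi_def cmul)
    qed
    have PhiK_A: "Phi ` K \<subseteq> r -` (s ` W)"
    proof
      fix z assume "z \<in> Phi ` K"
      then obtain k where k: "k \<in> K" "z = Phi k" by auto
      then have rkW: "r k \<in> r ` W" using rKW by auto
      then have tW: "th1 (r k) \<in> W" "r (th1 (r k)) = r k" using th2W by auto
      have "r z = s (th1 (r k))" using k tW by (simp add: Phi_def)
      then show "z \<in> r -` (s ` W)" using tW by auto
    qed
    have cg: "continuous_on UNIV g"
    proof -
      define B1 where "B1 = r -` (s ` W)"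
      define B2 where "B2 = - (Phi ` K)"
      have oB1: "open B1" unfolding B1_def using osW cont_r continuous_on_open_vimage[of UNIV r] by auto
      have oB2: "open B2" unfolding B2_def using kPK by (simp add: compact_imp_closed open_Compl)
      have c1: "continuous_on B1 g"
      proof -
        have cs: "continuous_on B1 (\<lambda>\<delta>. sg (r \<delta>))"
          by (rule continuous_on_compose2[OF csg continuous_on_subset[OF cont_r]]) (auto simp: B1_def)
        have cp: "continuous_on B1 (\<lambda>\<delta>. (sg (r \<delta>), \<delta>))"
          by (intro continuous_intros cs)
        have sb: "(\<lambda>\<delta>. (sg (r \<delta>), \<delta>)) ` B1 \<subseteq> {(g, h). s g = r h}"
          using sg2 by (auto simp: B1_def)
        have "continuous_on B1 (\<lambda>\<delta>. m (sg (r \<delta>)) \<delta>)"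
          using continuous_on_compose2[OF cont_m cp sb] by simp
        then have "continuous_on B1 (\<lambda>\<delta>. f (m (sg (r \<delta>)) \<delta>))"
          by (rule continuous_on_compose2[OF cf]) auto
        moreover have "continuous_on B1 g \<longleftrightarrow> continuous_on B1 (\<lambda>\<delta>. f (m (sg (r \<delta>)) \<delta>))"
          by (intro continuous_on_cong) (auto simp: g_def B1_def)
        ultimately show ?thesis by simp
      qed
      have c2: "continuous_on B2 g"
      proof -
        have "continuous_on B2 g \<longleftrightarrow> continuous_on B2 (\<lambda>_. 0::complex)"
          by (intro continuous_on_cong) (use gsub in \<open>auto simp: B2_def\<close>)
        then show ?thesis by simp
      qed
      have "B1 \<union> B2 = UNIV" using PhiK_A by (auto simp: B1_def B2_def)
      then show ?thesis using continuous_on_open_Un[OF oB1 oB2 c1 c2] by simp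
    qed
    have ssg: "supp g \<subseteq> Phi ` K" unfolding supp_def
      using gsub kPK by (simp add: closure_minimal compact_imp_closed)
    have gC: "g \<in> CcA (c -` {int n})"
      unfolding CcA_def using cg ssg kPK PhiK_c by (auto intro: compact_sub)
    then have gS: "g \<in> prod_span r m iv c n" using IH by auto
    have hS: "conv r m iv h g \<in> prod_span r m iv c (Suc n)"
      by (rule span_step[OF gS n1]) (use hC in \<open>simp add: Cc_deg_CcA\<close>)
    have eqf: "conv r m iv h g \<gamma>' = f \<gamma>'" for \<gamma>'
    proof (cases "r \<gamma>' \<in> r ` W")
      case True
      define t where "t = th1 (r \<gamma>')"
      have tW: "t \<in> W" "r t = r \<gamma>'" using th2W True by (auto simp: t_def)
      have "conv r m iv h g \<gamma>' = (\<Sum>\<alpha>\<in>{t}. h \<alpha> * g (m (iv \<alpha>) \<gamma>'))"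
      proof (rule conv_eq)
        show "{\<alpha>. r \<alpha> = r \<gamma>' \<and> h \<alpha> \<noteq> 0} \<subseteq> {t}"
        proof
          fix x assume x: "x \<in> {\<alpha>. r \<alpha> = r \<gamma>' \<and> h \<alpha> \<noteq> 0}"
          then have "x \<in> supp h" using supp_sub by auto
          then have "x \<in> W" using supph ph(5) by auto
          then have "x = th1 (r x)" using th1W by simp
          then show "x \<in> {t}" using x by (simp add: t_def)
        qed
        show "\<forall>\<alpha>\<in>{t}. r \<alpha> = r \<gamma>'" using tW by simp
      qed simp
      then have cv: "conv r m iv h g \<gamma>' = h t * g (m (iv t) \<gamma>')" by simp
      define d where "d = m (iv t) \<gamma>'"
      have rd: "r d = s t" using tW by (simp add: d_def)
      then have rds: "r d \<in> s ` W" using tW by auto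
      have "sg (r d) = t" using rd sg1 tW by simp
      moreover have "m t d = \<gamma>'"
      proof -
        have "m t d = m (m t (iv t)) \<gamma>'" unfolding d_def by (rule assoc[symmetric]) (simp_all add: tW)
        then show ?thesis using tW by simp
      qed
      ultimately have gd: "g d = f \<gamma>'" using rds by (simp add: g_def)
      show ?thesis
      proof (cases "f \<gamma>' = 0")
        case True then show ?thesis using cv gd by (simp add: d_def)
      next
        case False
        then have "\<gamma>' \<in> K" unfolding K_def by (rule supp_sub)
        then have "t \<in> L" unfolding L_def t_def by auto
        then have "h t = 1" using ph(3) by (simp add: h_def)
        then show ?thesis using cv gd by (simp add: d_def)
      qed
    next
      case False
      have e: "{\<alpha>. r \<alpha> = r \<gamma>' \<and> h \<alpha> \<noteq> 0} = {}"
      proof -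
        { fix x assume x: "r x = r \<gamma>'" "h x \<noteq> 0"
          then have "x \<in> supp h" using supp_sub by auto
          then have "x \<in> W" using supph ph(5) by auto
          then have "r \<gamma>' \<in> r ` W" using x by (metis image_eqI)
          with False have False by simp }
        then show ?thesis by blast
      qed
      have "f \<gamma>' = 0"
      proof (rule ccontr)
        assume "f \<gamma>' \<noteq> 0"
        then have "\<gamma>' \<in> K" unfolding K_def by (rule supp_sub)
        then show False using KO False by (auto simp: Op_def)
      qed
      then show ?thesis using e by (simp add: conv_def)
    qed
    have "conv r m iv h g = f" using eqf by (rule ext)
    then show "f \<in> prod_span r m iv c (Suc n)" using hS by simp
  qed
qed

lemma density_all:
  assumes unp: "unperforated r s m c" and n: "n > 0"
  shows "CcA (c -` {int n}) \<subseteq> prod_span r m iv c n"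
  using n
proof (induction n)
  case 0 then show ?case by simp
next
  case (Suc n)
  show ?case
  proof (cases "n = 0")
    case True
    then show ?thesis using span_base by (auto simp: Cc_deg_CcA)
  next
    case False
    then have IH: "CcA (c -` {int n}) \<subseteq> prod_span r m iv c n" and n1: "n \<ge> 1" using Suc by auto
    have "\<forall>\<gamma>. \<exists>Op. open Op \<and> \<gamma> \<in> Op \<and>
     (\<forall>f \<in> CcA (c -` {int (Suc n)}). supp f \<subseteq> Op \<longrightarrow> f \<in> prod_span r m iv c (Suc n))"
      using local_density[OF IH n1 unp] by blast
    then obtain Nb where Nb: "\<And>\<gamma>. open (Nb \<gamma>) \<and> \<gamma> \<in> Nb \<gamma> \<and>
     (\<forall>f \<in> CcA (c -` {int (Suc n)}). supp f \<subseteq> Nb \<gamma> \<longrightarrow> f \<in> prod_span r m iv c (Suc n))"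
      by metis
    show ?thesis
    proof
      fix f assume f: "f \<in> CcA (c -` {int (Suc n)})"
      show "f \<in> prod_span r m iv c (Suc n)"
      proof (rule partition[where P = "\<lambda>f. f \<in> prod_span r m iv c (Suc n)" and Nb = Nb and A = "c -` {int (Suc n)}"])
        show "(\<lambda>_. 0) \<in> prod_span r m iv c (Suc n)" by (rule span_zero)
        show "(\<lambda>x. f1 x + f2 x) \<in> prod_span r m iv c (Suc n)"
          if "f1 \<in> prod_span r m iv c (Suc n)" "f2 \<in> prod_span r m iv c (Suc n)" for f1 f2
          using span_add[OF that] .
        show "open (Nb x) \<and> x \<in> Nb x" for x using Nb by auto
        show "f \<in> prod_span r m iv c (Suc n)" if "f \<in> CcA (c -` {int (Suc n)})" "supp f \<subseteq> Nb x" for x f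
          using Nb that by blast
      qed (rule f)
    qed
  qed
qed

end

theorem mainTheorem4:
  fixes r s iv :: "'g::{t2_space,second_countable_topology} \<Rightarrow> 'g"
    and m :: "'g \<Rightarrow> 'g \<Rightarrow> 'g"
    and c :: "'g \<Rightarrow> int"
    and n :: nat
  assumes "etale_groupoid r s m iv"
    and "cocycle r s m c"
    and "unperforated r s m c"
    and "n > 0"
  shows "prod_span r m iv c n \<subseteq> Cc_deg c (int n)
    \<and> inductive_limit_dense (prod_span r m iv c n) (Cc_deg c (int n))
    \<and> involution iv ` Cc_deg c (int n) = Cc_deg c (- int n)"
proof -
  interpret egpd r s iv m c using assms(1,2) by unfold_locales
  have 1: "prod_span r m iv c n \<subseteq> Cc_deg c (int n)" using span_sub assms(4) by blast
  have 2: "inductive_limit_dense (prod_span r m iv c n) (Cc_deg c (int n))"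
    unfolding inductive_limit_dense_def
  proof
    fix f assume f: "f \<in> Cc_deg c (int n)"
    then have fS: "f \<in> prod_span r m iv c n"
      using density_all[OF assms(3,4)] by (auto simp: Cc_deg_CcA)
    show "\<exists>K. compact K \<and> (\<forall>\<epsilon>>0. \<exists>g\<in>prod_span r m iv c n. closure {x. g x \<noteq> 0} \<subseteq> K \<and> (\<forall>x. norm (f x - g x) < \<epsilon>))"
    proof (intro exI conjI allI impI)
      show "compact (closure {x. f x \<noteq> 0})" using f by (simp add: Cc_deg_def)
      fix \<epsilon> :: real assume "\<epsilon> > 0"
      then show "\<exists>g\<in>prod_span r m iv c n. closure {x. g x \<noteq> 0} \<subseteq> closure {x. f x \<noteq> 0} \<and> (\<forall>x. norm (f x - g x) < \<epsilon>)"
        using fS by auto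
    qed
  qed
  have 3: "involution iv ` Cc_deg c (int n) = Cc_deg c (- int n)" by (rule inv_image)
  show ?thesis using 1 2 3 by blast
qed


end
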